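(* Let $\mathcal G$ be an étale groupoid and $(Y,\Delta)$ a proper $\mathcal G$-simplicial complex satisfying hypotheses $(H_1)$ and $(H_2)$. Then the action of $\mathcal G$ on $|\Delta|$ is proper.
   Context: Étale groupoids are locally compact Hausdorff with range map a local homeomorphism. A $\mathcal G$-simplicial complex is a pair $(Y,\Delta)$ where $Y$ is a locally compact Hausdorff left $\mathcal G$-space whose anchor map $\rho:Y\to\mathcal G^{(0)}$ is a local homeomorphism and $\Delta$ is a family of finite nonempty subsets of $Y$ of bounded cardinality, each inside a fibre of $\rho$, closed under nonempty subsets and under $\delta\mapsto\gamma\delta$. It is proper if the $\mathcal G$-action on $Y$ is proper (i.e. $\mathcal G\ltimes Y$ is a proper groupoid). $|\Delta|=\{\mu\in P(Y):\mathrm{supp}(\mu)\in\Delta\}$, where $P(Y)$ is the space of positive Radon probability measures supported in a single fibre of $\rho$, with weak-$*$ topology from $C_c(Y,\mathbb R)$ and $\mathcal G$ acting by pushforward. $(H_1)$: for every compact $K\subseteq Y$, $\{y:\exists y'\in K,\{y,y'\}\in\Delta\}$ is compact. $(H_2)$: if nets $(y^{(i)}_\lambda)_\lambda$ converge to $y^{(i)}$ ($0\le i\le k$) and $\{y^{(0)}_\lambda,\dots,y^{(k)}_\lambda\}\in\Delta$ for all $\lambda$, then $\{y^{(0)},\dots,y^{(k)}\}\in\Delta$. *)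

theory Defs
  imports "HOL-Analysis.Analysis"
begin

definition local_homeomorphism_map :: "'a topology \<Rightarrow> 'b topology \<Rightarrow> ('a \<Rightarrow> 'b) \<Rightarrow> bool" where
  "local_homeomorphism_map X Y f \<longleftrightarrow>
     f ` topspace X \<subseteq> topspace Y \<and>
     (\<forall>x \<in> topspace X. \<exists>U. openin X U \<and> x \<in> U \<and> openin Y (f ` U) \<and>
          homeomorphic_map (subtopology X U) (subtopology Y (f ` U)) f)"

text \<open>A topological groupoid with arrow space TG (carrier G = topspace TG), range r,
  source s, partial multiplication m (defined on composable pairs s g = r h) and inverse i.\<close>

definition unit_space :: "'g topology \<Rightarrow> ('g \<Rightarrow> 'g) \<Rightarrow> 'g set" where
  "unit_space TG r = r ` topspace TG"

definition composable :: "'g topology \<Rightarrow> ('g \<Rightarrow> 'g) \<Rightarrow> ('g \<Rightarrow> 'g) \<Rightarrow> ('g \<times> 'g) set" where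
  "composable TG r s = {(g, h). g \<in> topspace TG \<and> h \<in> topspace TG \<and> s g = r h}"

definition groupoid :: "'g topology \<Rightarrow> ('g \<Rightarrow> 'g) \<Rightarrow> ('g \<Rightarrow> 'g) \<Rightarrow> ('g \<Rightarrow> 'g \<Rightarrow> 'g) \<Rightarrow> ('g \<Rightarrow> 'g) \<Rightarrow> bool" where
  "groupoid TG r s m i \<longleftrightarrow>
     (\<forall>g \<in> topspace TG. r g \<in> topspace TG \<and> s g \<in> topspace TG \<and> i g \<in> topspace TG
        \<and> r (r g) = r g \<and> s (r g) = r g \<and> r (s g) = s g \<and> s (s g) = s g
        \<and> r (i g) = s g \<and> s (i g) = r g
        \<and> m (r g) g = g \<and> m g (s g) = g
        \<and> m g (i g) = r g \<and> m (i g) g = s g) \<and>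
     (\<forall>(g, h) \<in> composable TG r s. m g h \<in> topspace TG \<and> r (m g h) = r g \<and> s (m g h) = s h) \<and>
     (\<forall>g \<in> topspace TG. \<forall>h \<in> topspace TG. \<forall>k \<in> topspace TG.
        s g = r h \<longrightarrow> s h = r k \<longrightarrow> m (m g h) k = m g (m h k))"

definition topological_groupoid :: "'g topology \<Rightarrow> ('g \<Rightarrow> 'g) \<Rightarrow> ('g \<Rightarrow> 'g) \<Rightarrow> ('g \<Rightarrow> 'g \<Rightarrow> 'g) \<Rightarrow> ('g \<Rightarrow> 'g) \<Rightarrow> bool" where
  "topological_groupoid TG r s m i \<longleftrightarrow>
     groupoid TG r s m i \<and>
     continuous_map TG TG r \<and> continuous_map TG TG s \<and> continuous_map TG TG i \<and>
     continuous_map (subtopology (prod_topology TG TG) (composable TG r s)) TG (\<lambda>(g, h). m g h)"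

definition etale_groupoid :: "'g topology \<Rightarrow> ('g \<Rightarrow> 'g) \<Rightarrow> ('g \<Rightarrow> 'g) \<Rightarrow> ('g \<Rightarrow> 'g \<Rightarrow> 'g) \<Rightarrow> ('g \<Rightarrow> 'g) \<Rightarrow> bool" where
  "etale_groupoid TG r s m i \<longleftrightarrow>
     topological_groupoid TG r s m i \<and> Hausdorff_space TG \<and> locally_compact_space TG \<and>
     local_homeomorphism_map TG (subtopology TG (unit_space TG r)) r"

definition action_domain :: "'g topology \<Rightarrow> ('g \<Rightarrow> 'g) \<Rightarrow> 'y set \<Rightarrow> ('y \<Rightarrow> 'g) \<Rightarrow> ('g \<times> 'y) set" where
  "action_domain TG s Y \<rho> = {(g, y). g \<in> topspace TG \<and> y \<in> Y \<and> s g = \<rho> y}"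

definition G_set :: "'g topology \<Rightarrow> ('g \<Rightarrow> 'g) \<Rightarrow> ('g \<Rightarrow> 'g) \<Rightarrow> ('g \<Rightarrow> 'g \<Rightarrow> 'g)
     \<Rightarrow> 'y set \<Rightarrow> ('y \<Rightarrow> 'g) \<Rightarrow> ('g \<Rightarrow> 'y \<Rightarrow> 'y) \<Rightarrow> bool" where
  "G_set TG r s m Y \<rho> act \<longleftrightarrow>
     (\<forall>y \<in> Y. \<rho> y \<in> unit_space TG r \<and> act (\<rho> y) y = y) \<and>
     (\<forall>(g, y) \<in> action_domain TG s Y \<rho>. act g y \<in> Y \<and> \<rho> (act g y) = r g) \<and>
     (\<forall>g \<in> topspace TG. \<forall>h \<in> topspace TG. \<forall>y \<in> Y.
        s g = r h \<longrightarrow> s h = \<rho> y \<longrightarrow> act (m g h) y = act g (act h y))"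

definition G_space :: "'g topology \<Rightarrow> ('g \<Rightarrow> 'g) \<Rightarrow> ('g \<Rightarrow> 'g) \<Rightarrow> ('g \<Rightarrow> 'g \<Rightarrow> 'g)
     \<Rightarrow> 'y topology \<Rightarrow> ('y \<Rightarrow> 'g) \<Rightarrow> ('g \<Rightarrow> 'y \<Rightarrow> 'y) \<Rightarrow> bool" where
  "G_space TG r s m TY \<rho> act \<longleftrightarrow>
     G_set TG r s m (topspace TY) \<rho> act \<and>
     Hausdorff_space TY \<and> locally_compact_space TY \<and>
     local_homeomorphism_map TY (subtopology TG (unit_space TG r)) \<rho> \<and>
     continuous_map (subtopology (prod_topology TG TY) (action_domain TG s (topspace TY) \<rho>)) TY
        (\<lambda>(g, y). act g y)"

text \<open>Proper action: the transformation groupoid G \<ltimes> Z is proper, i.e. its map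
  (range, source) : (g, z) \<mapsto> (g z, z) is a proper map (closed with compact fibres).\<close>
definition proper_action :: "'g topology \<Rightarrow> ('g \<Rightarrow> 'g) \<Rightarrow> 'z topology \<Rightarrow> ('z \<Rightarrow> 'g)
     \<Rightarrow> ('g \<Rightarrow> 'z \<Rightarrow> 'z) \<Rightarrow> bool" where
  "proper_action TG s TZ \<rho> act \<longleftrightarrow>
     proper_map (subtopology (prod_topology TG TZ) (action_domain TG s (topspace TZ) \<rho>))
                (prod_topology TZ TZ) (\<lambda>(g, z). (act g z, z))"

definition G_simplicial_complex :: "'g topology \<Rightarrow> ('g \<Rightarrow> 'g) \<Rightarrow> ('g \<Rightarrow> 'g) \<Rightarrow> ('g \<Rightarrow> 'g \<Rightarrow> 'g)
     \<Rightarrow> 'y topology \<Rightarrow> ('y \<Rightarrow> 'g) \<Rightarrow> ('g \<Rightarrow> 'y \<Rightarrow> 'y) \<Rightarrow> 'y set set \<Rightarrow> bool" where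
  "G_simplicial_complex TG r s m TY \<rho> act \<Delta> \<longleftrightarrow>
     G_space TG r s m TY \<rho> act \<and>
     (\<forall>\<delta> \<in> \<Delta>. finite \<delta> \<and> \<delta> \<noteq> {} \<and> \<delta> \<subseteq> topspace TY \<and> (\<exists>x. \<forall>y \<in> \<delta>. \<rho> y = x)) \<and>
     (\<exists>N::nat. \<forall>\<delta> \<in> \<Delta>. card \<delta> \<le> N) \<and>
     (\<forall>\<delta> \<in> \<Delta>. \<forall>\<delta>'. \<delta>' \<subseteq> \<delta> \<longrightarrow> \<delta>' \<noteq> {} \<longrightarrow> \<delta>' \<in> \<Delta>) \<and>
     (\<forall>\<delta> \<in> \<Delta>. \<forall>g \<in> topspace TG. (\<forall>y \<in> \<delta>. s g = \<rho> y) \<longrightarrow> act g ` \<delta> \<in> \<Delta>)"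

definition proper_G_simplicial_complex where
  "proper_G_simplicial_complex TG r s m TY \<rho> act \<Delta> \<longleftrightarrow>
     G_simplicial_complex TG r s m TY \<rho> act \<Delta> \<and> proper_action TG s TY \<rho> act"

definition hyp_H1 :: "'y topology \<Rightarrow> 'y set set \<Rightarrow> bool" where
  "hyp_H1 TY \<Delta> \<longleftrightarrow>
     (\<forall>K. compactin TY K \<longrightarrow> compactin TY {y. \<exists>y' \<in> K. {y, y'} \<in> \<Delta>})"

text \<open>(H2) with nets: a family of k+1 nets indexed by a directed set is the same as one net
  in the space of tuples; we express nets through (proper) filters on tuples
  z :: nat \<Rightarrow> 'y, using the coordinates z 0, ..., z k.\<close>
definition hyp_H2 :: "'y topology \<Rightarrow> 'y set set \<Rightarrow> bool" where
  "hyp_H2 TY \<Delta> \<longleftrightarrow>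
     (\<forall>(F :: (nat \<Rightarrow> 'y) filter) (k::nat) (y :: nat \<Rightarrow> 'y).
        F \<noteq> bot \<longrightarrow>
        (\<forall>i \<le> k. limitin TY (\<lambda>z. z i) (y i) F) \<longrightarrow>
        (\<forall>\<^sub>F z in F. (\<lambda>i. z i) ` {0..k} \<in> \<Delta>) \<longrightarrow>
        y ` {0..k} \<in> \<Delta>)"

definition Cc :: "'y topology \<Rightarrow> ('y \<Rightarrow> real) \<Rightarrow> bool" where
  "Cc TY f \<longleftrightarrow> continuous_map TY euclideanreal f \<and>
     compactin TY (TY closure_of {y \<in> topspace TY. f y \<noteq> 0})"

text \<open>Positive Radon probability measures with finite support are exactly finite convex
  combinations of Dirac measures; we represent such a measure by its weight function
  \<mu> :: 'y \<Rightarrow> real, so that supp \<mu> = {y. \<mu> y \<noteq> 0} and \<integral> f d\<mu> = \<Sum>y\<in>supp \<mu>. \<mu> y * f y.\<close>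
definition msupp :: "('y \<Rightarrow> real) \<Rightarrow> 'y set" where
  "msupp \<mu> = {y. \<mu> y \<noteq> 0}"

definition mintegral :: "('y \<Rightarrow> real) \<Rightarrow> ('y \<Rightarrow> real) \<Rightarrow> real" where
  "mintegral \<mu> f = (\<Sum>y \<in> msupp \<mu>. \<mu> y * f y)"

definition realization :: "'y set set \<Rightarrow> ('y \<Rightarrow> real) set" where
  "realization \<Delta> = {\<mu>. (\<forall>y. 0 \<le> \<mu> y) \<and> msupp \<mu> \<in> \<Delta> \<and> finite (msupp \<mu>) \<and>
                         sum \<mu> (msupp \<mu>) = 1}"

text \<open>Weak-* topology induced from C_c(Y,R) (subspace topology of P(Y) on |\<Delta>|, which is the
  initial topology of the maps \<mu> \<mapsto> \<integral> f d\<mu>, f \<in> C_c(Y)).\<close>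
definition realization_topology :: "'y topology \<Rightarrow> 'y set set \<Rightarrow> ('y \<Rightarrow> real) topology" where
  "realization_topology TY \<Delta> = topology_generated_by
     {{\<mu> \<in> realization \<Delta>. mintegral \<mu> f \<in> U} | f U. Cc TY f \<and> open U}"

text \<open>Anchor of a measure: the base point of the fibre containing its support.\<close>
definition realization_anchor :: "('y \<Rightarrow> 'g) \<Rightarrow> ('y \<Rightarrow> real) \<Rightarrow> 'g" where
  "realization_anchor \<rho> \<mu> = \<rho> (SOME y. y \<in> msupp \<mu>)"

definition pushforward :: "('g \<Rightarrow> 'y \<Rightarrow> 'y) \<Rightarrow> 'g \<Rightarrow> ('y \<Rightarrow> real) \<Rightarrow> ('y \<Rightarrow> real)" where
  "pushforward act g \<mu> = (\<lambda>y'. \<Sum>y \<in> {y \<in> msupp \<mu>. act g y = y'}. \<mu> y)"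

end

theory Submission
  imports Defs
begin


lemma Cc_bump:
  assumes H: "Hausdorff_space X" and LC: "locally_compact_space X" and U: "openin X U" "y \<in> U"
    and T: "finite T" "y \<notin> T"
  shows "\<exists>f. Cc X f \<and> f y = 1 \<and> (\<forall>x. 0 \<le> f x \<and> f x \<le> 1) \<and> (\<forall>x. x \<notin> U \<longrightarrow> f x = 0)
     \<and> (\<forall>x\<in>T. f x = 0)"
proof -
  have yX: "y \<in> topspace X" using U openin_subset by blast
  obtain V K where V: "openin X V" "compactin X K" "y \<in> V" "V \<subseteq> K"
    using LC yX unfolding locally_compact_space_def by blast
  define W where "W = U \<inter> V - (T \<inter> topspace X)"
  have cT: "closedin X (T \<inter> topspace X)"
    using Hausdorff_imp_t1_space[OF H] T t1_space_closedin_finite by (metis inf_le2 finite_Int)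
  have oW: "openin X W" unfolding W_def using U V cT by blast
  have yW: "y \<in> W" using U V T yX unfolding W_def by auto
  have CR: "completely_regular_space X"
    using locally_compact_regular_imp_completely_regular_space LC H by blast
  have cS: "closedin X (topspace X - W)" using oW by blast
  have yS: "y \<in> topspace X - (topspace X - W)" using yW yX by blast
  obtain f0 :: "_ \<Rightarrow> real" where f0: "continuous_map X (top_of_set {0..1}) f0" "f0 y = 0" "f0 ` (topspace X - W) \<subseteq> {1}"
    using CR cS yS unfolding completely_regular_space_def by blast
  define f where "f x = (if x \<in> topspace X then 1 - f0 x else 0)" for x
  have f0r: "f0 x \<in> {0..1}" if "x \<in> topspace X" for x
    using f0(1) that by (auto simp: continuous_map_def)
  have cf: "continuous_map X euclideanreal f"
  proof -
    have "continuous_map X euclideanreal (\<lambda>x. 1 - f0 x)"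
      using f0(1) by (intro continuous_intros) (simp add: continuous_map_in_subtopology)
    then show ?thesis by (rule continuous_map_eq) (simp add: f_def)
  qed
  have sub: "{x \<in> topspace X. f x \<noteq> 0} \<subseteq> K"
    using f0(3) V(4) unfolding f_def W_def by force
  have "closedin X K" using compactin_imp_closedin[OF H V(2)] .
  then have "X closure_of {x \<in> topspace X. f x \<noteq> 0} \<subseteq> K"
    using closure_of_minimal sub by blast
  then have "compactin X (X closure_of {x \<in> topspace X. f x \<noteq> 0})"
    using closed_compactin V(2) closedin_closure_of by blast
  then have "Cc X f" using cf by (simp add: Cc_def)
  moreover have "f y = 1" using yX f0(2) by (simp add: f_def)
  moreover have "\<forall>x. 0 \<le> f x \<and> f x \<le> 1" using f0r by (simp add: f_def)
  moreover have "\<forall>x. x \<notin> U \<longrightarrow> f x = 0" using f0(3) unfolding f_def W_def by force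
  moreover have "\<forall>x\<in>T. f x = 0" using f0(3) unfolding f_def W_def by force
  ultimately show ?thesis by blast
qed

lemma msupp_finite_sub: "finite I \<Longrightarrow> msupp (\<lambda>y'. \<Sum>i\<in>{i\<in>I. e i = y'}. (a::_\<Rightarrow>real) i) \<subseteq> e ` I"
  unfolding msupp_def
proof
  fix y' assume "finite I" "y' \<in> {y'. (\<Sum>i\<in>{i \<in> I. e i = y'}. a i) \<noteq> 0}"
  show "y' \<in> e ` I"
  proof (rule ccontr)
    assume "y' \<notin> e ` I"
    then have "{i \<in> I. e i = y'} = {}" by auto
    with \<open>y' \<in> _\<close> show False by simp
  qed
qed

lemma mintegral_push_gen:
  assumes "finite I"
  shows "mintegral (\<lambda>y'. \<Sum>i\<in>{i\<in>I. e i = y'}. (a::_\<Rightarrow>real) i) f = (\<Sum>i\<in>I. a i * f (e i))"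
proof -
  define P where "P = (\<lambda>y'. \<Sum>i\<in>{i\<in>I. e i = y'}. a i)"
  have sub: "msupp P \<subseteq> e ` I" unfolding P_def using msupp_finite_sub[OF assms] .
  have "mintegral P f = (\<Sum>y'\<in>e ` I. P y' * f y')"
    unfolding mintegral_def
    by (rule sum.mono_neutral_left) (use sub assms in \<open>auto simp: msupp_def\<close>)
  also have "\<dots> = (\<Sum>y'\<in>e ` I. \<Sum>i\<in>{i\<in>I. e i = y'}. a i * f (e i))"
    unfolding P_def sum_distrib_right by (intro sum.cong refl) auto
  also have "\<dots> = (\<Sum>i\<in>I. a i * f (e i))"
    by (rule sum.image_gen[symmetric]) (rule assms)
  finally show ?thesis unfolding P_def .
qed

lemma mintegral_bump:
  assumes "finite (msupp \<mu>)" "\<forall>z\<in>msupp \<mu>. z \<noteq> y \<longrightarrow> f z = 0" "f y = 1"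
  shows "mintegral \<mu> f = \<mu> y"
proof -
  have "mintegral \<mu> f = (\<Sum>z\<in>msupp \<mu>. if z = y then \<mu> y else 0)"
    unfolding mintegral_def using assms by (intro sum.cong) auto
  also have "\<dots> = \<mu> y"
    using assms(1) by (auto simp: msupp_def)
  finally show ?thesis .
qed

lemma separation:
  assumes H: "Hausdorff_space X" and LC: "locally_compact_space X"
    and fin: "finite (msupp \<mu>1)" "finite (msupp \<mu>2)"
    and sub: "msupp \<mu>1 \<subseteq> topspace X" "msupp \<mu>2 \<subseteq> topspace X"
    and eq: "\<And>f. Cc X f \<Longrightarrow> mintegral \<mu>1 f = mintegral \<mu>2 f"
  shows "\<mu>1 = \<mu>2"
proof
  fix y
  show "\<mu>1 y = \<mu>2 y"
  proof (cases "y \<in> topspace X")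
    case True
    obtain f where f: "Cc X f" "f y = 1" "\<forall>x\<in>(msupp \<mu>1 \<union> msupp \<mu>2) - {y}. f x = 0"
      using Cc_bump[OF H LC openin_topspace True, of "(msupp \<mu>1 \<union> msupp \<mu>2) - {y}"] fin by auto
    have "mintegral \<mu>1 f = \<mu>1 y" by (rule mintegral_bump) (use f fin in auto)
    moreover have "mintegral \<mu>2 f = \<mu>2 y" by (rule mintegral_bump) (use f fin in auto)
    ultimately show ?thesis using eq[OF f(1)] by simp
  next
    case False
    then have "y \<notin> msupp \<mu>1" "y \<notin> msupp \<mu>2" using sub by auto
    then show ?thesis by (simp add: msupp_def)
  qed
qed

lemma refine:
  assumes F: "F \<noteq> bot" and K: "compactin X K" and ev: "eventually (\<lambda>x. \<phi> x \<in> K) F"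
  shows "\<exists>F'. F' \<le> F \<and> F' \<noteq> bot \<and> (\<exists>p\<in>K. limitin X \<phi> p F')"
proof (rule ccontr)
  assume nt: "\<not> ?thesis"
  have nb: "inf F (filtercomap \<phi> (nhdsin X p)) = bot" if "p \<in> K" for p
  proof -
    have lim: "limitin X \<phi> p (inf F (filtercomap \<phi> (nhdsin X p)))"
      unfolding limitin_def
    proof (intro conjI allI impI)
      show "p \<in> topspace X" using K that compactin_subset_topspace by blast
      fix U assume "openin X U \<and> p \<in> U"
      then have "eventually (\<lambda>x. \<phi> x \<in> U) (filtercomap \<phi> (nhdsin X p))"
        unfolding eventually_filtercomap eventually_nhdsin by (intro exI[of _ "\<lambda>z. z \<in> U"]) auto
      then show "eventually (\<lambda>x. \<phi> x \<in> U) (inf F (filtercomap \<phi> (nhdsin X p)))"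
        unfolding eventually_inf by (intro exI[of _ "\<lambda>x. True"] exI[of _ "\<lambda>x. \<phi> x \<in> U"]) auto
    qed
    show ?thesis
    proof (rule ccontr)
      assume "inf F (filtercomap \<phi> (nhdsin X p)) \<noteq> bot"
      then have "\<exists>F'. F' \<le> F \<and> F' \<noteq> bot \<and> (\<exists>p\<in>K. limitin X \<phi> p F')"
        using lim that by (intro exI[of _ "inf F (filtercomap \<phi> (nhdsin X p))"]) auto
      with nt show False by blast
    qed
  qed
  have "\<exists>U. openin X U \<and> p \<in> U \<and> eventually (\<lambda>x. \<phi> x \<notin> U) F" if "p \<in> K" for p
  proof -
    have "eventually (\<lambda>x. False) (inf F (filtercomap \<phi> (nhdsin X p)))" using nb[OF that] by simp
    then obtain P Q where PQ: "eventually P F" "eventually Q (filtercomap \<phi> (nhdsin X p))" "\<forall>x. P x \<and> Q x \<longrightarrow> False"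
      unfolding eventually_inf by blast
    then obtain R where R: "eventually R (nhdsin X p)" "\<forall>x. R (\<phi> x) \<longrightarrow> Q x"
      unfolding eventually_filtercomap by blast
    have pX: "p \<in> topspace X" using K that compactin_subset_topspace by blast
    then obtain U where U: "openin X U" "p \<in> U" "\<forall>z\<in>U. R z" using R(1) unfolding eventually_nhdsin by blast
    have "eventually (\<lambda>x. \<phi> x \<notin> U) F"
      using PQ(1) by eventually_elim (use PQ(3) R(2) U(3) in blast)
    then show ?thesis using U by blast
  qed
  then obtain U where U: "\<And>p. p \<in> K \<Longrightarrow> openin X (U p) \<and> p \<in> U p \<and> eventually (\<lambda>x. \<phi> x \<notin> U p) F"
    by metis
  have c1: "\<forall>V\<in>U ` K. openin X V" using U by blast
  have c2: "K \<subseteq> \<Union>(U ` K)" using U by blast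
  have cc: "(\<forall>V\<in>U ` K. openin X V) \<and> K \<subseteq> \<Union>(U ` K)" using c1 c2 by (rule conjI)
  have "\<exists>\<F>. finite \<F> \<and> \<F> \<subseteq> U ` K \<and> K \<subseteq> \<Union>\<F>"
  proof -
    have "\<forall>\<U>. (\<forall>U \<in> \<U>. openin X U) \<and> K \<subseteq> \<Union>\<U> \<longrightarrow> (\<exists>\<F>. finite \<F> \<and> \<F> \<subseteq> \<U> \<and> K \<subseteq> \<Union>\<F>)"
      using K unfolding compactin_def by (rule conjunct2)
    then have "(\<forall>V\<in>U ` K. openin X V) \<and> K \<subseteq> \<Union>(U ` K) \<longrightarrow> (\<exists>\<F>. finite \<F> \<and> \<F> \<subseteq> U ` K \<and> K \<subseteq> \<Union>\<F>)"
      by (rule spec)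
    then show ?thesis using cc by (rule mp)
  qed
  then obtain \<V> where V: "finite \<V>" "\<V> \<subseteq> U ` K" "K \<subseteq> \<Union>\<V>" by blast
  obtain K0 where K0': "K0 \<subseteq> K" "finite K0" "\<V> = U ` K0"
    using finite_subset_image[OF V(1) V(2)] by blast
  have K0: "finite K0" "K0 \<subseteq> K" "K \<subseteq> \<Union>(U ` K0)" using K0' V(3) by auto
  have "eventually (\<lambda>x. \<forall>p\<in>K0. \<phi> x \<notin> U p) F"
    using K0 U by (subst eventually_ball_finite_distrib) auto
  with ev have "eventually (\<lambda>x. False) F"
    by eventually_elim (use K0 in blast)
  with F show False by simp
qed

lemma limitin_le_filter: "limitin X f l F \<Longrightarrow> F' \<le> F \<Longrightarrow> limitin X f l F'"
  unfolding limitin_def using filter_leD by blast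

lemma refine_many:
  fixes n :: nat
  assumes F: "F \<noteq> bot" and K: "compactin X K" and ev: "\<And>i. i < n \<Longrightarrow> eventually (\<lambda>x. \<phi> i x \<in> K) F"
  shows "\<exists>F'. F' \<le> F \<and> F' \<noteq> bot \<and> (\<exists>p. \<forall>i<n. p i \<in> K \<and> limitin X (\<phi> i) (p i) F')"
  using ev
proof (induction n)
  case 0
  then show ?case using F by auto
next
  case (Suc n)
  have "\<And>i. i < n \<Longrightarrow> eventually (\<lambda>x. \<phi> i x \<in> K) F" using Suc.prems by simp
  then obtain F1 p where F1: "F1 \<le> F" "F1 \<noteq> bot" "\<forall>i<n. p i \<in> K \<and> limitin X (\<phi> i) (p i) F1"
    using Suc.IH by blast
  have "eventually (\<lambda>x. \<phi> n x \<in> K) F1" using Suc.prems[of n] F1(1) filter_leD by blast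
  then obtain F2 q where F2: "F2 \<le> F1" "F2 \<noteq> bot" "q \<in> K" "limitin X (\<phi> n) q F2"
    using refine[OF F1(2) K] by blast
  show ?case
  proof (intro exI conjI)
    show "F2 \<le> F" using F1(1) F2(1) order_trans by blast
    show "F2 \<noteq> bot" by fact
    show "\<forall>i<Suc n. (p(n:=q)) i \<in> K \<and> limitin X (\<phi> i) ((p(n:=q)) i) F2"
    proof (intro allI impI)
      fix i assume "i < Suc n"
      show "(p(n:=q)) i \<in> K \<and> limitin X (\<phi> i) ((p(n:=q)) i) F2"
      proof (cases "i = n")
        case True then show ?thesis using F2 by simp
      next
        case False
        then have "i < n" using \<open>i < Suc n\<close> by simp
        then have "p i \<in> K" "limitin X (\<phi> i) (p i) F1" using F1(3) by blast+
        then show ?thesis using limitin_le_filter[OF _ F2(1)] False by simp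
      qed
    qed
  qed
qed

lemma local_homeo_cont:
  assumes "local_homeomorphism_map X Y f"
  shows "continuous_map X Y f"
  unfolding continuous_map_eq_topcontinuous_at topcontinuous_at_def
proof (intro ballI conjI allI impI)
  fix x assume x: "x \<in> topspace X"
  show "x \<in> topspace X" by fact
  show "f \<in> topspace X \<rightarrow> topspace Y" using assms unfolding local_homeomorphism_map_def by auto
  fix V assume V: "openin Y V \<and> f x \<in> V"
  obtain U where U: "openin X U" "x \<in> U" "homeomorphic_map (subtopology X U) (subtopology Y (f ` U)) f"
    using assms x unfolding local_homeomorphism_map_def by blast
  have "continuous_map (subtopology X U) Y f"
    using homeomorphic_imp_continuous_map[OF U(3)] continuous_map_in_subtopology by blast
  then have "openin (subtopology X U) {z \<in> topspace (subtopology X U). f z \<in> V}"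
    using V by (simp add: continuous_map_def)
  then have o: "openin X {z \<in> topspace (subtopology X U). f z \<in> V}"
    using U(1) openin_open_subtopology by blast
  show "\<exists>W. openin X W \<and> x \<in> W \<and> (\<forall>y\<in>W. f y \<in> V)"
  proof (intro exI conjI)
    show "openin X {z \<in> topspace (subtopology X U). f z \<in> V}" by (rule o)
    show "x \<in> {z \<in> topspace (subtopology X U). f z \<in> V}" using U x V by simp
    show "\<forall>y\<in>{z \<in> topspace (subtopology X U). f z \<in> V}. f y \<in> V" by blast
  qed
qed



lemma cl_nonbot:
  assumes q: "q \<in> Y closure_of (h ` C)"
  shows "inf (filtercomap h (nhdsin Y q)) (principal C) \<noteq> bot"
proof
  assume "inf (filtercomap h (nhdsin Y q)) (principal C) = bot"
  then have "eventually (\<lambda>x. False) (inf (filtercomap h (nhdsin Y q)) (principal C))" by simp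
  then obtain P Q where PQ: "eventually P (filtercomap h (nhdsin Y q))" "eventually Q (principal C)" "\<forall>x. P x \<and> Q x \<longrightarrow> False"
    unfolding eventually_inf by blast
  obtain R where R: "eventually R (nhdsin Y q)" "\<forall>x. R (h x) \<longrightarrow> P x"
    using PQ(1) unfolding eventually_filtercomap by blast
  have qY: "q \<in> topspace Y" by (rule in_closure_of[THEN iffD1, OF q, THEN conjunct1])
  have qc: "\<forall>T. q \<in> T \<and> openin Y T \<longrightarrow> (\<exists>y. y \<in> h ` C \<and> y \<in> T)"
    by (rule in_closure_of[THEN iffD1, OF q, THEN conjunct2])
  obtain S where S: "openin Y S" "q \<in> S" "\<forall>z\<in>S. R z" using R(1) qY unfolding eventually_nhdsin by blast
  have "\<exists>y. y \<in> h ` C \<and> y \<in> S" using qc S(1,2) by simp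
  then obtain y where y: "y \<in> h ` C" "y \<in> S" by blast
  then obtain x where x: "x \<in> C" "y = h x" by blast
  have "Q x" using PQ(2) x(1) unfolding eventually_principal by simp
  moreover have "R (h x)" using S(3) y(2) x(2) by simp
  then have "P x" using R(2) by simp
  ultimately show False using PQ(3) by simp
qed

lemma cl_lim:
  assumes "q \<in> topspace Y"
  shows "limitin Y h q (inf (filtercomap h (nhdsin Y q)) (principal C))"
  unfolding limitin_def
proof (intro conjI allI impI)
  show "q \<in> topspace Y" by fact
  fix U assume U: "openin Y U \<and> q \<in> U"
  have "eventually (\<lambda>x. h x \<in> U) (filtercomap h (nhdsin Y q))"
    unfolding eventually_filtercomap eventually_nhdsin using U by (intro exI[of _ "\<lambda>z. z \<in> U"]) auto
  then show "eventually (\<lambda>x. h x \<in> U) (inf (filtercomap h (nhdsin Y q)) (principal C))"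
    unfolding eventually_inf by (intro exI[of _ "\<lambda>x. h x \<in> U"] exI[of _ "\<lambda>x. True"]) auto
qed

lemma cl_ev: "eventually (\<lambda>x. x \<in> C) (inf (filtercomap h (nhdsin Y q)) (principal C))"
  unfolding eventually_inf eventually_principal by (intro exI[of _ "\<lambda>x. True"] exI[of _ "\<lambda>x. x \<in> C"]) auto

locale psc =
  fixes TG :: "'g topology" and r s :: "'g \<Rightarrow> 'g" and m :: "'g \<Rightarrow> 'g \<Rightarrow> 'g" and i :: "'g \<Rightarrow> 'g"
    and TY :: "'y topology" and \<rho> :: "'y \<Rightarrow> 'g" and act :: "'g \<Rightarrow> 'y \<Rightarrow> 'y"
    and \<Delta> :: "'y set set"
  assumes etale: "etale_groupoid TG r s m i"
    and pc: "proper_G_simplicial_complex TG r s m TY \<rho> act \<Delta>"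
    and H1: "hyp_H1 TY \<Delta>"
begin

abbreviation "AY \<equiv> action_domain TG s (topspace TY) \<rho>"
abbreviation "RR \<equiv> realization \<Delta>"
abbreviation "TR \<equiv> realization_topology TY \<Delta>"
abbreviation "anc \<equiv> realization_anchor \<rho>"
abbreviation "AA \<equiv> action_domain TG s RR anc"
abbreviation "XY \<equiv> subtopology (prod_topology TG TY) AY"

lemma TG_H: "Hausdorff_space TG"
  using etale unfolding etale_groupoid_def by simp
lemma s_cont: "continuous_map TG TG s"
  using etale unfolding etale_groupoid_def topological_groupoid_def by simp
lemma GS: "G_space TG r s m TY \<rho> act"
  using pc unfolding proper_G_simplicial_complex_def G_simplicial_complex_def by simp
lemma TY_H: "Hausdorff_space TY" using GS unfolding G_space_def by simp
lemma TY_LC: "locally_compact_space TY" using GS unfolding G_space_def by simp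
lemma rho_cont: "continuous_map TY TG \<rho>"
proof -
  have "local_homeomorphism_map TY (subtopology TG (unit_space TG r)) \<rho>"
    using GS unfolding G_space_def by simp
  then have "continuous_map TY (subtopology TG (unit_space TG r)) \<rho>" by (rule local_homeo_cont)
  then show ?thesis by (simp add: continuous_map_in_subtopology)
qed
lemma act_cont: "continuous_map XY TY (\<lambda>(g, y). act g y)"
  using GS unfolding G_space_def by simp
lemma act_in: "g \<in> topspace TG \<Longrightarrow> y \<in> topspace TY \<Longrightarrow> s g = \<rho> y \<Longrightarrow> act g y \<in> topspace TY"
proof -
  have "\<forall>(g, y) \<in> AY. act g y \<in> topspace TY \<and> \<rho> (act g y) = r g"
    using GS unfolding G_space_def G_set_def by (elim conjE) assumption
  moreover assume "g \<in> topspace TG" "y \<in> topspace TY" "s g = \<rho> y"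
  ultimately show "act g y \<in> topspace TY" unfolding action_domain_def by blast
qed
lemma properY: "proper_map XY (prod_topology TY TY) (\<lambda>(g, y). (act g y, y))"
  using pc unfolding proper_G_simplicial_complex_def proper_action_def by simp
lemma SC: "G_simplicial_complex TG r s m TY \<rho> act \<Delta>"
  using pc unfolding proper_G_simplicial_complex_def by simp
lemma SCu: "(\<forall>\<delta> \<in> \<Delta>. finite \<delta> \<and> \<delta> \<noteq> {} \<and> \<delta> \<subseteq> topspace TY \<and> (\<exists>x. \<forall>y \<in> \<delta>. \<rho> y = x)) \<and>
     (\<exists>N::nat. \<forall>\<delta> \<in> \<Delta>. card \<delta> \<le> N) \<and>
     (\<forall>\<delta> \<in> \<Delta>. \<forall>\<delta>'. \<delta>' \<subseteq> \<delta> \<longrightarrow> \<delta>' \<noteq> {} \<longrightarrow> \<delta>' \<in> \<Delta>) \<and>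
     (\<forall>\<delta> \<in> \<Delta>. \<forall>g \<in> topspace TG. (\<forall>y \<in> \<delta>. s g = \<rho> y) \<longrightarrow> act g ` \<delta> \<in> \<Delta>)"
  using SC unfolding G_simplicial_complex_def by (elim conjE) (intro conjI; assumption)
lemma Delta_props: "\<delta> \<in> \<Delta> \<Longrightarrow> finite \<delta> \<and> \<delta> \<noteq> {} \<and> \<delta> \<subseteq> topspace TY \<and> (\<exists>x. \<forall>y \<in> \<delta>. \<rho> y = x)"
  using SCu by (elim conjE) (erule bspec)
lemma Delta_sub: assumes "\<delta> \<in> \<Delta>" "\<delta>' \<subseteq> \<delta>" "\<delta>' \<noteq> {}" shows "\<delta>' \<in> \<Delta>"
proof -
  have h: "\<forall>\<delta> \<in> \<Delta>. \<forall>\<delta>'. \<delta>' \<subseteq> \<delta> \<longrightarrow> \<delta>' \<noteq> {} \<longrightarrow> \<delta>' \<in> \<Delta>" using SCu by (elim conjE)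
  show ?thesis using h assms by blast
qed
lemma Delta_act: assumes "\<delta> \<in> \<Delta>" "g \<in> topspace TG" "\<forall>y \<in> \<delta>. s g = \<rho> y" shows "act g ` \<delta> \<in> \<Delta>"
proof -
  have h: "\<forall>\<delta> \<in> \<Delta>. \<forall>g \<in> topspace TG. (\<forall>y \<in> \<delta>. s g = \<rho> y) \<longrightarrow> act g ` \<delta> \<in> \<Delta>" using SCu by (elim conjE)
  show ?thesis using h assms by blast
qed
lemma ex_N: "\<exists>N::nat. \<forall>\<delta> \<in> \<Delta>. card \<delta> \<le> N"
  using SCu by (elim conjE)

definition "NN = (SOME N::nat. \<forall>\<delta> \<in> \<Delta>. card \<delta> \<le> N)"
lemma card_le: "\<delta> \<in> \<Delta> \<Longrightarrow> card \<delta> \<le> NN"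
  unfolding NN_def by (rule someI_ex[OF ex_N, THEN bspec])

lemma H1': "compactin TY K \<Longrightarrow> compactin TY {y. \<exists>y' \<in> K. {y, y'} \<in> \<Delta>}"
  using H1 unfolding hyp_H1_def by (elim allE impE)

lemma topspace_TR [simp]: "topspace TR = RR"
proof -
  have Cc0: "Cc TY (\<lambda>_. 0)" by (simp add: Cc_def)
  have "RR \<in> {{\<mu> \<in> RR. mintegral \<mu> f \<in> U} | f U. Cc TY f \<and> open U}"
    using Cc0 by (intro CollectI exI[of _ "\<lambda>_. 0"] exI[of _ UNIV]) auto
  then show ?thesis unfolding realization_topology_def by auto
qed

lemma R_props:
  assumes "\<mu> \<in> RR"
  shows "\<And>y. 0 \<le> \<mu> y" "msupp \<mu> \<in> \<Delta>" "finite (msupp \<mu>)" "sum \<mu> (msupp \<mu>) = 1"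
    "msupp \<mu> \<noteq> {}" "msupp \<mu> \<subseteq> topspace TY"
  using assms Delta_props unfolding realization_def by auto

lemma anc_eq: assumes "\<mu> \<in> RR" "y \<in> msupp \<mu>" shows "anc \<mu> = \<rho> y"
proof -
  have "(SOME y. y \<in> msupp \<mu>) \<in> msupp \<mu>" using assms(2) by (rule someI)
  moreover obtain x where "\<forall>y \<in> msupp \<mu>. \<rho> y = x" using Delta_props R_props(2)[OF assms(1)] by blast
  ultimately show ?thesis using assms(2) unfolding realization_anchor_def by simp
qed

lemma mu_pos: "\<mu> \<in> RR \<Longrightarrow> y \<in> msupp \<mu> \<Longrightarrow> 0 < \<mu> y"
  using R_props(1)[of \<mu> y] by (simp add: msupp_def order_less_le)

lemma mu_le1: assumes "\<mu> \<in> RR" shows "\<mu> y \<le> 1"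
proof (cases "y \<in> msupp \<mu>")
  case True
  have "\<mu> y \<le> sum \<mu> (msupp \<mu>)"
    by (rule member_le_sum) (use True R_props[OF assms] in auto)
  then show ?thesis using R_props[OF assms] by simp
next
  case False then show ?thesis by (simp add: msupp_def)
qed

lemma A_mem: "x \<in> AA \<longleftrightarrow> fst x \<in> topspace TG \<and> snd x \<in> RR \<and> s (fst x) = anc (snd x)"
  by (cases x) (auto simp: action_domain_def)

lemma push_int: "finite (msupp \<mu>) \<Longrightarrow> mintegral (pushforward act g \<mu>) f = (\<Sum>y\<in>msupp \<mu>. \<mu> y * f (act g y))"
  unfolding pushforward_def by (rule mintegral_push_gen)

lemma push_supp_in:
  assumes "\<mu> \<in> RR" "y \<in> msupp \<mu>"
  shows "act g y \<in> msupp (pushforward act g \<mu>)"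
proof -
  have "\<mu> y \<le> (\<Sum>y'\<in>{y'\<in>msupp \<mu>. act g y' = act g y}. \<mu> y')"
    by (rule member_le_sum) (use assms R_props[OF assms(1)] in auto)
  then show ?thesis using mu_pos[OF assms] unfolding pushforward_def msupp_def by auto
qed

lemma push_R:
  assumes "\<mu> \<in> RR" "g \<in> topspace TG" "s g = anc \<mu>"
  shows "pushforward act g \<mu> \<in> RR"
proof -
  let ?p = "pushforward act g \<mu>"
  note P = R_props[OF assms(1)]
  have eq: "msupp ?p = act g ` msupp \<mu>"
  proof
    show "msupp ?p \<subseteq> act g ` msupp \<mu>"
      unfolding pushforward_def using msupp_finite_sub[OF P(3)] .
    show "act g ` msupp \<mu> \<subseteq> msupp ?p" using push_supp_in[OF assms(1)] by blast
  qed
  have "act g ` msupp \<mu> \<in> \<Delta>"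
    by (rule Delta_act[OF P(2) assms(2)]) (use anc_eq[OF assms(1)] assms(3) in auto)
  moreover have "\<forall>y. 0 \<le> ?p y" unfolding pushforward_def using P(1) by (simp add: sum_nonneg)
  moreover have "sum ?p (msupp ?p) = 1"
  proof -
    have "sum ?p (msupp ?p) = mintegral ?p (\<lambda>_. 1)" by (simp add: mintegral_def)
    also have "\<dots> = 1" using push_int[OF P(3)] P(4) by simp
    finally show ?thesis .
  qed
  ultimately show ?thesis unfolding realization_def using eq P(3) by auto
qed

definition "en \<mu> = (SOME h. bij_betw h {0..<card (msupp \<mu>)} (msupp \<mu>))"
definition "zt \<mu> j = (if j < card (msupp \<mu>) then en \<mu> j else en \<mu> 0)"
definition "wt \<mu> j = (if j < card (msupp \<mu>) then \<mu> (en \<mu> j) else 0)"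

lemma en_bij: assumes "\<mu> \<in> RR" shows "bij_betw (en \<mu>) {0..<card (msupp \<mu>)} (msupp \<mu>)"
  unfolding en_def using ex_bij_betw_nat_finite[OF R_props(3)[OF assms]] by (rule someI_ex)

lemma zt_in: assumes "\<mu> \<in> RR" shows "zt \<mu> j \<in> msupp \<mu>"
proof -
  have "0 < card (msupp \<mu>)" using R_props[OF assms] by (simp add: card_gt_0_iff)
  then show ?thesis using bij_betwE[OF en_bij[OF assms]] unfolding zt_def by auto
qed

lemma wt_range: assumes "\<mu> \<in> RR" shows "0 \<le> wt \<mu> j \<and> wt \<mu> j \<le> 1"
  unfolding wt_def using R_props(1)[OF assms] mu_le1[OF assms] by auto

lemma tuple_sum:
  assumes "\<mu> \<in> RR"
  shows "(\<Sum>j<NN. wt \<mu> j * h (zt \<mu> j)) = (\<Sum>y\<in>msupp \<mu>. \<mu> y * h y)"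
proof -
  have cle: "card (msupp \<mu>) \<le> NN" by (rule card_le[OF R_props(2)[OF assms]])
  have "(\<Sum>j<NN. wt \<mu> j * h (zt \<mu> j)) = (\<Sum>j\<in>{0..<card (msupp \<mu>)}. \<mu> (en \<mu> j) * h (en \<mu> j))"
    by (rule sum.mono_neutral_cong_right) (use cle in \<open>auto simp: wt_def zt_def\<close>)
  also have "\<dots> = (\<Sum>y\<in>msupp \<mu>. \<mu> y * h y)"
    by (rule sum.reindex_bij_betw[OF en_bij[OF assms]])
  finally show ?thesis .
qed

lemma conv:
  assumes "limitin TR \<phi> \<mu> F" "Cc TY f"
  shows "((\<lambda>x. mintegral (\<phi> x) f) \<longlongrightarrow> mintegral \<mu> f) F"
proof (rule topological_tendstoI)
  fix S :: "real set" assume S: "open S" "mintegral \<mu> f \<in> S"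
  let ?B = "{\<nu> \<in> RR. mintegral \<nu> f \<in> S}"
  have "openin TR ?B" unfolding realization_topology_def
    by (rule topology_generated_by_Basis) (use S assms(2) in blast)
  moreover have "\<mu> \<in> ?B" using limitin_topspace[OF assms(1)] S by simp
  ultimately have "eventually (\<lambda>x. \<phi> x \<in> ?B) F" using assms(1) unfolding limitin_def by blast
  then show "eventually (\<lambda>x. mintegral (\<phi> x) f \<in> S) F" by eventually_elim auto
qed

lemma confine:
  assumes lim: "limitin TR \<phi> \<mu> F"
  shows "\<exists>L. compactin TY L \<and> eventually (\<lambda>x. msupp (\<phi> x) \<subseteq> L) F"
proof -
  have \<mu>R: "\<mu> \<in> RR" using limitin_topspace[OF lim] by simp
  note P = R_props[OF \<mu>R]
  obtain y0 where y0: "y0 \<in> msupp \<mu>" using P(5) by blast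
  then have y0X: "y0 \<in> topspace TY" using P(6) by blast
  obtain U0 K0 where UK: "openin TY U0" "compactin TY K0" "y0 \<in> U0" "U0 \<subseteq> K0"
    using TY_LC y0X unfolding locally_compact_space_def by blast
  obtain f where f: "Cc TY f" "f y0 = 1" "\<forall>x. 0 \<le> f x \<and> f x \<le> 1" "\<forall>x. x \<notin> U0 \<longrightarrow> f x = 0"
    using Cc_bump[OF TY_H TY_LC UK(1) UK(3), of "{}"] by auto
  have "\<mu> y0 * f y0 \<le> mintegral \<mu> f"
    unfolding mintegral_def by (rule member_le_sum) (use y0 P f in auto)
  then have pos: "0 < mintegral \<mu> f" using mu_pos[OF \<mu>R y0] f(2) by simp
  have ev: "eventually (\<lambda>x. 0 < mintegral (\<phi> x) f) F"
    using order_tendstoD(1)[OF conv[OF lim f(1)] pos] .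
  have evR: "eventually (\<lambda>x. \<phi> x \<in> RR) F"
    using lim unfolding limitin_def by (metis openin_topspace topspace_TR)
  define L where "L = {y. \<exists>y' \<in> K0. {y, y'} \<in> \<Delta>}"
  have "compactin TY L" unfolding L_def by (rule H1'[OF UK(2)])
  moreover have "eventually (\<lambda>x. msupp (\<phi> x) \<subseteq> L) F"
    using ev evR
  proof eventually_elim
    case (elim x)
    have "\<exists>y\<in>msupp (\<phi> x). f y \<noteq> 0"
    proof (rule ccontr)
      assume "\<not> ?thesis"
      then have "mintegral (\<phi> x) f = 0" unfolding mintegral_def by simp
      with elim show False by simp
    qed
    then obtain y where y: "y \<in> msupp (\<phi> x)" "y \<in> K0" using f(4) UK(4) by blast
    show ?case
    proof
      fix y' assume y': "y' \<in> msupp (\<phi> x)"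
      have "{y', y} \<in> \<Delta>" by (rule Delta_sub[OF R_props(2)[OF elim(2)]]) (use y y' in auto)
      then show "y' \<in> L" unfolding L_def using y by blast
    qed
  qed
  ultimately show ?thesis by blast
qed

lemma snd_lim_R: "limitin TR \<phi> \<mu> F \<Longrightarrow> eventually (\<lambda>x. \<phi> x \<in> RR) F"
  unfolding limitin_def by (metis openin_topspace topspace_TR)

lemma core:
  assumes Fnb: "F \<noteq> bot" and evA: "eventually (\<lambda>x. x \<in> AA) F"
    and limP: "limitin TR (\<lambda>x. pushforward act (fst x) (snd x)) \<nu> F"
    and limM: "limitin TR snd \<mu> F"
  shows "\<exists>F'. F' \<le> F \<and> F' \<noteq> bot \<and> (\<exists>gl. limitin TG fst gl F' \<and> (gl, \<mu>) \<in> AA \<and> pushforward act gl \<mu> = \<nu>)"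
proof -
  have \<mu>R: "\<mu> \<in> RR" using limitin_topspace[OF limM] by simp
  have \<nu>R: "\<nu> \<in> RR" using limitin_topspace[OF limP] by simp
  obtain L0 where L0: "compactin TY L0" "eventually (\<lambda>x. msupp (snd x) \<subseteq> L0) F"
    using confine[OF limM] by blast
  obtain L1 where L1: "compactin TY L1" "eventually (\<lambda>x. msupp (pushforward act (fst x) (snd x)) \<subseteq> L1) F"
    using confine[OF limP] by blast
  define Pre where "Pre = {w \<in> topspace XY. (\<lambda>(g, y). (act g y, y)) w \<in> L1 \<times> L0}"
  have cPre: "compactin XY Pre"
    unfolding Pre_def using properY L0(1) L1(1) unfolding proper_map_alt
    by (simp add: compactin_Times)
  define KG where "KG = fst ` Pre"
  have cfst: "continuous_map XY TG fst"
    by (rule continuous_map_from_subtopology) (rule continuous_map_fst)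
  have cKG: "compactin TG KG" unfolding KG_def by (rule image_compactin[OF cPre cfst])
  have evKG: "eventually (\<lambda>x. fst x \<in> KG) F"
    using evA L0(2) L1(2)
  proof eventually_elim
    case (elim x)
    then have x: "fst x \<in> topspace TG" "snd x \<in> RR" "s (fst x) = anc (snd x)" using A_mem by auto
    let ?y = "zt (snd x) 0"
    have y: "?y \<in> msupp (snd x)" by (rule zt_in[OF x(2)])
    have yX: "?y \<in> topspace TY" using R_props(6)[OF x(2)] y by blast
    have "(fst x, ?y) \<in> AY" using x yX anc_eq[OF x(2) y] unfolding action_domain_def by simp
    moreover have "act (fst x) ?y \<in> L1" using push_supp_in[OF x(2) y] elim(3) by blast
    moreover have "?y \<in> L0" using y elim(2) by blast
    ultimately have "(fst x, ?y) \<in> Pre" unfolding Pre_def using x(1) yX by simp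
    then show ?case unfolding KG_def by force
  qed
  obtain F1 gl where F1: "F1 \<le> F" "F1 \<noteq> bot" "gl \<in> KG" "limitin TG fst gl F1"
    using refine[OF Fnb cKG evKG] by blast
  have glG: "gl \<in> topspace TG" using limitin_topspace[OF F1(4)] .
  define \<psi> where "\<psi> j (x::'g \<times> ('y \<Rightarrow> real)) = (zt (snd x) j, wt (snd x) j)" for j x
  have cK: "compactin (prod_topology TY euclideanreal) (L0 \<times> {0..1})"
    using L0(1) by (simp add: compactin_Times)
  have ev\<psi>: "eventually (\<lambda>x. \<psi> j x \<in> L0 \<times> {0..1}) F1" for j
  proof -
    have "eventually (\<lambda>x. \<psi> j x \<in> L0 \<times> {0..1}) F"
      using evA L0(2)
    proof eventually_elim
      case (elim x)
      then have x: "snd x \<in> RR" using A_mem by auto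
      show ?case unfolding \<psi>_def using zt_in[OF x] wt_range[OF x] elim(2) by auto
    qed
    then show ?thesis using F1(1) filter_leD by blast
  qed
  obtain F2 p where F2: "F2 \<le> F1" "F2 \<noteq> bot" "\<forall>j<NN. p j \<in> L0 \<times> {0..1} \<and> limitin (prod_topology TY euclideanreal) (\<psi> j) (p j) F2"
    using refine_many[OF F1(2) cK, of NN \<psi>] ev\<psi> by blast
  define yv where "yv j = fst (p j)" for j
  define av where "av j = snd (p j)" for j
  have F2F: "F2 \<le> F" using F1(1) F2(1) order_trans by blast
  have yvL: "yv j \<in> L0" if "j < NN" for j using F2(3) that unfolding yv_def by auto
  have yvX: "yv j \<in> topspace TY" if "j < NN" for j using yvL[OF that] compactin_subset_topspace[OF L0(1)] by blast
  have limz: "limitin TY (\<lambda>x. zt (snd x) j) (yv j) F2" if "j < NN" for j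
    using F2(3) that unfolding limitin_pairwise yv_def \<psi>_def by (simp add: o_def)
  have limw: "((\<lambda>x. wt (snd x) j) \<longlongrightarrow> av j) F2" if "j < NN" for j
    using F2(3) that unfolding limitin_pairwise av_def \<psi>_def by (simp add: o_def)
  have evA2: "eventually (\<lambda>x. x \<in> AA) F2" using evA F2F filter_leD by blast
  have limg: "limitin TG fst gl F2" using limitin_le_filter[OF F1(4) F2(1)] .
  define lam where "lam = (\<lambda>y. \<Sum>j\<in>{j\<in>{..<NN}. yv j = y}. av j)"
  have mint_lam: "mintegral lam h = (\<Sum>j<NN. av j * h (yv j))" for h
    unfolding lam_def by (rule mintegral_push_gen) simp
  have lam_fin: "finite (msupp lam)" and lam_sub: "msupp lam \<subseteq> topspace TY"
  proof -
    have "msupp lam \<subseteq> yv ` {..<NN}" unfolding lam_def by (rule msupp_finite_sub) simp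
    then show "finite (msupp lam)" "msupp lam \<subseteq> topspace TY"
      using yvX finite_subset[of "msupp lam" "yv ` {..<NN}"] by auto
  qed
  have \<mu>_eq: "\<mu> = lam"
  proof (rule separation[OF TY_H TY_LC R_props(3)[OF \<mu>R] lam_fin R_props(6)[OF \<mu>R] lam_sub])
    fix f assume f: "Cc TY f"
    have cf: "continuous_map TY euclideanreal f" using f unfolding Cc_def by blast
    have t1: "((\<lambda>x. \<Sum>j<NN. wt (snd x) j * f (zt (snd x) j)) \<longlongrightarrow> (\<Sum>j<NN. av j * f (yv j))) F2"
    proof (rule tendsto_sum, rule tendsto_mult)
      fix j assume "j \<in> {..<NN}"
      then have j: "j < NN" by simp
      show "((\<lambda>x. wt (snd x) j) \<longlongrightarrow> av j) F2" by (rule limw[OF j])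
      have "limitin euclideanreal (f \<circ> (\<lambda>x. zt (snd x) j)) (f (yv j)) F2"
        by (rule continuous_map_limit[OF cf limz[OF j]])
      then show "((\<lambda>x. f (zt (snd x) j)) \<longlongrightarrow> f (yv j)) F2" by (simp add: o_def)
    qed
    have t2: "((\<lambda>x. mintegral (snd x) f) \<longlongrightarrow> mintegral \<mu> f) F2"
      using tendsto_mono[OF F2F conv[OF limM f]] .
    have ev: "eventually (\<lambda>x. mintegral (snd x) f = (\<Sum>j<NN. wt (snd x) j * f (zt (snd x) j))) F2"
      using evA2
    proof eventually_elim
      case (elim x)
      then have x: "snd x \<in> RR" using A_mem by auto
      show ?case unfolding mintegral_def tuple_sum[OF x] ..
    qed
    have t3: "((\<lambda>x. mintegral (snd x) f) \<longlongrightarrow> (\<Sum>j<NN. av j * f (yv j))) F2"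
      by (rule tendsto_cong[OF ev, THEN iffD2, OF t1])
    have "mintegral \<mu> f = (\<Sum>j<NN. av j * f (yv j))"
      using tendsto_unique[OF F2(2) t2 t3] .
    then show "mintegral \<mu> f = mintegral lam f" unfolding mint_lam .
  qed
  have s_gl: "s gl = \<rho> (yv j)" if j: "j < NN" for j
  proof -
    have l1: "limitin TG (s \<circ> fst) (s gl) F2" by (rule continuous_map_limit[OF s_cont limg])
    have l2: "limitin TG (\<rho> \<circ> (\<lambda>x. zt (snd x) j)) (\<rho> (yv j)) F2"
      by (rule continuous_map_limit[OF rho_cont limz[OF j]])
    have "eventually (\<lambda>x. (\<rho> \<circ> (\<lambda>x. zt (snd x) j)) x = (s \<circ> fst) x) F2"
      using evA2
    proof eventually_elim
      case (elim x)
      then have x: "snd x \<in> RR" "s (fst x) = anc (snd x)" using A_mem by auto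
      show ?case using anc_eq[OF x(1) zt_in[OF x(1)]] x(2) by simp
    qed
    from limitin_transform_eventually[OF this l2] have "limitin TG (s \<circ> fst) (\<rho> (yv j)) F2" .
    then show ?thesis using limitin_Hausdorff_unique[OF l1 _ _ TG_H] F2(2) by simp
  qed
  have limact: "limitin TY (\<lambda>x. act (fst x) (zt (snd x) j)) (act gl (yv j)) F2" if j: "j < NN" for j
  proof -
    have "limitin XY (\<lambda>x. (fst x, zt (snd x) j)) (gl, yv j) F2"
      unfolding limitin_subtopology
    proof (intro conjI)
      show "(gl, yv j) \<in> AY" using glG yvX[OF j] s_gl[OF j] unfolding action_domain_def by simp
      show "eventually (\<lambda>x. (fst x, zt (snd x) j) \<in> AY) F2"
        using evA2
      proof eventually_elim
        case (elim x)
        then have x: "fst x \<in> topspace TG" "snd x \<in> RR" "s (fst x) = anc (snd x)" using A_mem by auto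
        have "zt (snd x) j \<in> topspace TY" using zt_in[OF x(2)] R_props(6)[OF x(2)] by blast
        then show ?case using x anc_eq[OF x(2) zt_in[OF x(2)]] unfolding action_domain_def by simp
      qed
      show "limitin (prod_topology TG TY) (\<lambda>x. (fst x, zt (snd x) j)) (gl, yv j) F2"
        unfolding limitin_pairwise using limg limz[OF j] by (simp add: o_def)
    qed
    from continuous_map_limit[OF act_cont this] show ?thesis by (simp add: o_def)
  qed
  define lam' where "lam' = (\<lambda>y. \<Sum>j\<in>{j\<in>{..<NN}. act gl (yv j) = y}. av j)"
  have mint_lam': "mintegral lam' h = (\<Sum>j<NN. av j * h (act gl (yv j)))" for h
    unfolding lam'_def by (rule mintegral_push_gen) simp
  have \<nu>_int: "mintegral \<nu> f = mintegral lam' f" if f: "Cc TY f" for f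
  proof -
    have cf: "continuous_map TY euclideanreal f" using f unfolding Cc_def by blast
    have t1: "((\<lambda>x. \<Sum>j<NN. wt (snd x) j * f (act (fst x) (zt (snd x) j))) \<longlongrightarrow> (\<Sum>j<NN. av j * f (act gl (yv j)))) F2"
    proof (rule tendsto_sum, rule tendsto_mult)
      fix j assume "j \<in> {..<NN}"
      then have j: "j < NN" by simp
      show "((\<lambda>x. wt (snd x) j) \<longlongrightarrow> av j) F2" by (rule limw[OF j])
      have "limitin euclideanreal (f \<circ> (\<lambda>x. act (fst x) (zt (snd x) j))) (f (act gl (yv j))) F2"
        by (rule continuous_map_limit[OF cf limact[OF j]])
      then show "((\<lambda>x. f (act (fst x) (zt (snd x) j))) \<longlongrightarrow> f (act gl (yv j))) F2" by (simp add: o_def)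
    qed
    have t2: "((\<lambda>x. mintegral (pushforward act (fst x) (snd x)) f) \<longlongrightarrow> mintegral \<nu> f) F2"
      using tendsto_mono[OF F2F conv[OF limP f]] .
    have ev: "eventually (\<lambda>x. mintegral (pushforward act (fst x) (snd x)) f = (\<Sum>j<NN. wt (snd x) j * f (act (fst x) (zt (snd x) j)))) F2"
      using evA2
    proof eventually_elim
      case (elim x)
      then have x: "snd x \<in> RR" using A_mem by auto
      show ?case unfolding push_int[OF R_props(3)[OF x]] using tuple_sum[OF x, of "\<lambda>y. f (act (fst x) y)"] by simp
    qed
    have t3: "((\<lambda>x. mintegral (pushforward act (fst x) (snd x)) f) \<longlongrightarrow> (\<Sum>j<NN. av j * f (act gl (yv j)))) F2"
      by (rule tendsto_cong[OF ev, THEN iffD2, OF t1])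
    have "mintegral \<nu> f = (\<Sum>j<NN. av j * f (act gl (yv j)))"
      using tendsto_unique[OF F2(2) t2 t3] .
    then show ?thesis unfolding mint_lam' .
  qed
  obtain y1 where y1: "y1 \<in> msupp \<mu>" using R_props(5)[OF \<mu>R] by blast
  have "lam y1 \<noteq> 0" using y1 \<mu>_eq by (simp add: msupp_def)
  then have "{j\<in>{..<NN}. yv j = y1} \<noteq> {}" unfolding lam_def by (metis (no_types, lifting) sum.empty)
  then obtain j where j: "j < NN" "yv j = y1" by blast
  have s_anc: "s gl = anc \<mu>" using s_gl[OF j(1)] j(2) anc_eq[OF \<mu>R y1] by simp
  have pR: "pushforward act gl \<mu> \<in> RR" by (rule push_R[OF \<mu>R glG s_anc])
  have push_eq: "pushforward act gl \<mu> = \<nu>"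
  proof (rule separation[OF TY_H TY_LC R_props(3)[OF pR] R_props(3)[OF \<nu>R] R_props(6)[OF pR] R_props(6)[OF \<nu>R]])
    fix f assume f: "Cc TY f"
    have "mintegral (pushforward act gl \<mu>) f = (\<Sum>y\<in>msupp \<mu>. \<mu> y * f (act gl y))"
      by (rule push_int[OF R_props(3)[OF \<mu>R]])
    also have "\<dots> = mintegral \<mu> (\<lambda>y. f (act gl y))" by (simp add: mintegral_def)
    also have "\<dots> = mintegral lam' f" unfolding \<mu>_eq mint_lam mint_lam' ..
    also have "\<dots> = mintegral \<nu> f" using \<nu>_int[OF f] by simp
    finally show "mintegral (pushforward act gl \<mu>) f = mintegral \<nu> f" .
  qed
  have "(gl, \<mu>) \<in> AA" using glG \<mu>R s_anc unfolding action_domain_def by simp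
  then show ?thesis using F2F F2(2) limg push_eq by blast
qed

lemma Phi_eq: "(\<lambda>(g, z). (pushforward act g z, z)) = (\<lambda>x. (pushforward act (fst x) (snd x), snd x))"
  by (auto simp: fun_eq_iff)

lemma main: "proper_action TG s TR anc (pushforward act)"
proof -
  let ?X = "subtopology (prod_topology TG TR) AA"
  let ?Y = "prod_topology TR TR"
  let ?\<Phi> = "\<lambda>x. (pushforward act (fst x) (snd x), snd x)"
  have topX: "topspace ?X = AA"
    by (auto simp: action_domain_def)
  have cm: "closed_map ?X ?Y ?\<Phi>"
    unfolding closed_map_def
  proof (intro allI impI)
    fix C assume C: "closedin ?X C"
    have CA: "C \<subseteq> AA" using closedin_subset[OF C] topX by simp
    have img: "?\<Phi> ` C \<subseteq> topspace ?Y"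
    proof
      fix z assume "z \<in> ?\<Phi> ` C"
      then obtain x where x: "x \<in> C" "z = ?\<Phi> x" by blast
      have "x \<in> AA" using x(1) CA by blast
      then have "fst x \<in> topspace TG" "snd x \<in> RR" "s (fst x) = anc (snd x)" unfolding A_mem by auto
      then show "z \<in> topspace ?Y" using x push_R by simp
    qed
    have "?Y closure_of (?\<Phi> ` C) \<subseteq> ?\<Phi> ` C"
    proof
      fix q assume q: "q \<in> ?Y closure_of (?\<Phi> ` C)"
      obtain \<nu> \<mu> where q\<nu>\<mu>: "q = (\<nu>, \<mu>)" by (cases q)
      define F where "F = inf (filtercomap ?\<Phi> (nhdsin ?Y q)) (principal C)"
      have Fnb: "F \<noteq> bot" unfolding F_def by (rule cl_nonbot[OF q])
      have qY: "q \<in> topspace ?Y" by (rule in_closure_of[THEN iffD1, OF q, THEN conjunct1])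
      have lim: "limitin ?Y ?\<Phi> q F" unfolding F_def by (rule cl_lim[OF qY])
      have evC: "eventually (\<lambda>x. x \<in> C) F" unfolding F_def by (rule cl_ev)
      have evA: "eventually (\<lambda>x. x \<in> AA) F" using evC by eventually_elim (use CA in blast)
      have limP: "limitin TR (\<lambda>x. pushforward act (fst x) (snd x)) \<nu> F"
        using lim unfolding limitin_pairwise q\<nu>\<mu> by (simp add: o_def)
      have limM: "limitin TR snd \<mu> F"
        using lim unfolding limitin_pairwise q\<nu>\<mu> by (simp add: o_def)
      obtain F' gl where F': "F' \<le> F" "F' \<noteq> bot" "limitin TG fst gl F'" "(gl, \<mu>) \<in> AA" "pushforward act gl \<mu> = \<nu>"
        using core[OF Fnb evA limP limM] by blast
      have evA': "eventually (\<lambda>x. x \<in> AA) F'" using evA F'(1) filter_leD by blast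
      have evC': "eventually (\<lambda>x. x \<in> C) F'" using evC F'(1) filter_leD by blast
      have "limitin ?X (\<lambda>x. x) (gl, \<mu>) F'"
        unfolding limitin_subtopology limitin_pairwise
        using F'(3,4) evA' limitin_le_filter[OF limM F'(1)] by (simp add: o_def)
      then have "(gl, \<mu>) \<in> C" using limitin_closedin[OF _ C evC'] F'(2) by simp
      then show "q \<in> ?\<Phi> ` C" using F'(5) q\<nu>\<mu> by force
    qed
    then show "closedin ?Y (?\<Phi> ` C)" using img closure_of_subset_eq by blast
  qed
  have cf: "compactin ?X {x \<in> topspace ?X. ?\<Phi> x = q}" if qY: "q \<in> topspace ?Y" for q
  proof -
    obtain \<nu> \<mu> where q\<nu>\<mu>: "q = (\<nu>, \<mu>)" by (cases q)
    have \<nu>R: "\<nu> \<in> RR" and \<mu>R: "\<mu> \<in> RR" using qY q\<nu>\<mu> by auto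
    define Fib where "Fib = {x \<in> topspace ?X. ?\<Phi> x = q}"
    obtain y0 where y0: "y0 \<in> msupp \<mu>" using R_props(5)[OF \<mu>R] by blast
    have y0X: "y0 \<in> topspace TY" using y0 R_props(6)[OF \<mu>R] by blast
    define Pre where "Pre = {w \<in> topspace XY. (\<lambda>(g, y). (act g y, y)) w \<in> msupp \<nu> \<times> {y0}}"
    have cPre: "compactin XY Pre"
    proof -
      have "compactin TY (msupp \<nu>)" using finite_imp_compactin R_props(3,6)[OF \<nu>R] by blast
      then have "compactin (prod_topology TY TY) (msupp \<nu> \<times> {y0})" using y0X by (simp add: compactin_Times)
      then show ?thesis unfolding Pre_def using properY unfolding proper_map_alt by simp
    qed
    define KG where "KG = fst ` Pre"
    have cfst: "continuous_map XY TG fst"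
      by (rule continuous_map_from_subtopology) (rule continuous_map_fst)
    have cKG: "compactin TG KG" unfolding KG_def by (rule image_compactin[OF cPre cfst])
    have KGA: "KG \<times> {\<mu>} \<subseteq> AA"
    proof
      fix z assume "z \<in> KG \<times> {\<mu>}"
      then obtain w where w: "w \<in> Pre" "z = (fst w, \<mu>)" unfolding KG_def by auto
      then have "fst w \<in> topspace TG" "snd w = y0" "s (fst w) = \<rho> (snd w)"
        unfolding Pre_def by (auto simp: action_domain_def)
      then show "z \<in> AA" using w(2) \<mu>R anc_eq[OF \<mu>R y0] unfolding action_domain_def by simp
    qed
    have cK: "compactin ?X (KG \<times> {\<mu>})"
      unfolding compactin_subtopology using cKG \<mu>R KGA by (simp add: compactin_Times)
    have sub: "Fib \<subseteq> KG \<times> {\<mu>}"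
    proof
      fix x assume x: "x \<in> Fib"
      then have xA: "x \<in> AA" and e: "pushforward act (fst x) (snd x) = \<nu>" "snd x = \<mu>"
        unfolding Fib_def using topX q\<nu>\<mu> by auto
      then have g: "fst x \<in> topspace TG" "s (fst x) = anc \<mu>" using A_mem by auto
      have "(fst x, y0) \<in> Pre"
        unfolding Pre_def using g y0X anc_eq[OF \<mu>R y0] push_supp_in[OF \<mu>R y0, of "fst x"] e
        by (auto simp: action_domain_def)
      then have "fst x \<in> KG" unfolding KG_def by force
      then show "x \<in> KG \<times> {\<mu>}" using e(2) by (cases x) auto
    qed
    have "?X closure_of Fib \<subseteq> Fib"
    proof
      fix xs assume xs: "xs \<in> ?X closure_of Fib"
      define F where "F = inf (filtercomap (\<lambda>x. x) (nhdsin ?X xs)) (principal Fib)"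
      have Fnb: "F \<noteq> bot" unfolding F_def by (rule cl_nonbot) (use xs in simp)
      have xsX: "xs \<in> topspace ?X" by (rule in_closure_of[THEN iffD1, OF xs, THEN conjunct1])
      have lim: "limitin ?X (\<lambda>x. x) xs F" unfolding F_def by (rule cl_lim[OF xsX])
      have evF: "eventually (\<lambda>x. x \<in> Fib) F" unfolding F_def by (rule cl_ev)
      have evA: "eventually (\<lambda>x. x \<in> AA) F" using evF by eventually_elim (auto simp: Fib_def topX)
      have ev1: "eventually (\<lambda>x. \<nu> = pushforward act (fst x) (snd x)) F"
        using evF by eventually_elim (auto simp: Fib_def q\<nu>\<mu>)
      have ev2: "eventually (\<lambda>x. \<mu> = snd x) F"
        using evF by eventually_elim (auto simp: Fib_def q\<nu>\<mu>)
      have limP: "limitin TR (\<lambda>x. pushforward act (fst x) (snd x)) \<nu> F"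
        by (rule limitin_transform_eventually[OF ev1]) (simp add: \<nu>R)
      have limM: "limitin TR snd \<mu> F"
        by (rule limitin_transform_eventually[OF ev2]) (simp add: \<mu>R)
      obtain F' gl where F': "F' \<le> F" "F' \<noteq> bot" "limitin TG fst gl F'" "(gl, \<mu>) \<in> AA" "pushforward act gl \<mu> = \<nu>"
        using core[OF Fnb evA limP limM] by blast
      have lim': "limitin ?X (\<lambda>x. x) xs F'" by (rule limitin_le_filter[OF lim F'(1)])
      then have l1: "limitin TG fst (fst xs) F'" and l2: "limitin TR snd (snd xs) F'"
        unfolding limitin_subtopology limitin_pairwise by (simp_all add: o_def)
      have "fst xs = gl" using limitin_Hausdorff_unique[OF l1 F'(3) _ TG_H] F'(2) by simp
      moreover have "snd xs = \<mu>"
      proof -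
        have sR: "snd xs \<in> RR" using limitin_topspace[OF l2] by simp
        have "eventually (\<lambda>x. \<mu> = snd x) F'" by (rule filter_leD[OF F'(1) ev2])
        then have ev2': "eventually (\<lambda>x. snd x = \<mu>) F'" by eventually_elim simp
        show ?thesis
        proof (rule separation[OF TY_H TY_LC R_props(3)[OF sR] R_props(3)[OF \<mu>R] R_props(6)[OF sR] R_props(6)[OF \<mu>R]])
          fix f assume f: "Cc TY f"
          have t1: "((\<lambda>x. mintegral (snd x) f) \<longlongrightarrow> mintegral (snd xs) f) F'" by (rule conv[OF l2 f])
          have "eventually (\<lambda>x. mintegral (snd x) f = mintegral \<mu> f) F'" using ev2' by eventually_elim simp
          then have t2: "((\<lambda>x. mintegral (snd x) f) \<longlongrightarrow> mintegral \<mu> f) F'"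
            by (rule tendsto_eventually)
          show "mintegral (snd xs) f = mintegral \<mu> f" using tendsto_unique[OF F'(2) t1 t2] .
        qed
      qed
      ultimately have "xs = (gl, \<mu>)" by (cases xs) auto
      then show "xs \<in> Fib" unfolding Fib_def using xsX F'(5) q\<nu>\<mu> by simp
    qed
    moreover have "Fib \<subseteq> topspace ?X" unfolding Fib_def by (rule Collect_restrict)
    ultimately have "closedin ?X Fib" using closure_of_subset_eq[of Fib ?X] by (simp only: conj_commute simp_thms)
    then have "compactin ?X Fib" by (rule closed_compactin[OF cK sub])
    then show ?thesis unfolding Fib_def .
  qed
  have pm: "proper_map ?X ?Y ?\<Phi>"
    unfolding proper_map_def
  proof (intro conjI ballI)
    show "closed_map ?X ?Y ?\<Phi>" by (rule cm)
    fix q assume "q \<in> topspace ?Y"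
    then show "compactin ?X {x \<in> topspace ?X. ?\<Phi> x = q}" by (rule cf)
  qed
  show ?thesis
    unfolding proper_action_def topspace_TR Phi_eq by (rule pm)
qed

end


theorem proposition3p24:
  fixes TG :: "'g topology" and r s :: "'g \<Rightarrow> 'g" and m :: "'g \<Rightarrow> 'g \<Rightarrow> 'g" and i :: "'g \<Rightarrow> 'g"
    and TY :: "'y topology" and \<rho> :: "'y \<Rightarrow> 'g" and act :: "'g \<Rightarrow> 'y \<Rightarrow> 'y"
    and \<Delta> :: "'y set set"
  assumes "etale_groupoid TG r s m i"
    and "proper_G_simplicial_complex TG r s m TY \<rho> act \<Delta>"
    and "hyp_H1 TY \<Delta>"
    and "hyp_H2 TY \<Delta>"
  shows "proper_action TG s (realization_topology TY \<Delta>) (realization_anchor \<rho>) (pushforward act)"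
proof -
  interpret psc TG r s m i TY \<rho> act \<Delta>
    using assms(1-3) by unfold_locales
  show ?thesis by (rule main)
qed

end
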